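(* Let $f:[0,\infty)\to\mathbb{R}$ be convex with $f(1)=0$ and strictly convex at $x=1$, and let $G:[0,\mathsf{D_m}(f))\to[0,\infty)$ be continuous and non-decreasing with $G(0)=0$ and $G(x)>0$ for all $x>0$. Then $(G,f)$ is divergence-subadditive if and only if it is information-subadditive.
   Context: All alphabets are finite. For distributions $p\ll q$ on a finite set $\mathcal{X}$ and convex $f$ with $f(1)=0$, $D_f(p\|q)=\sum_x q(x) f(p(x)/q(x))$ with the convention $0f(0/0)=0$. $\mathsf{D_m}(f)=f(0)+\lim_{t\to\infty} f(t)/t$. Define $\mathcal{D}_{G,f}(p\|q)=G(D_f(p\|q))$ and, for random variables $X,Y$ on finite sets, $I_{G,f}(X;Y)=\min_{q_Y}\sum_x p_X(x)\,G(D_f(p_{Y|X=x}\|q_Y))$, the minimum over distributions $q_Y$ on the alphabet of $Y$. $(G,f)$ is divergence-subadditive if for all finite sets $\mathcal{Y},\mathcal{Z}$ and all distributions $q_Y\ll r_Y$ on $\mathcal{Y}$, $q_Z\ll r_Z$ on $\mathcal{Z}$: $\mathcal{D}_{G,f}(q_Yq_Z\|r_Yr_Z)\le \mathcal{D}_{G,f}(q_Y\|r_Y)+\mathcal{D}_{G,f}(q_Z\|r_Z)$. $(G,f)$ is information-subadditive if for all random variables $X,Y,Z$ on finite sets with $p_{XYZ}=p_Xp_{Y|X}p_{Z|X}$ (i.e. $Y\to X\to Z$ is a Markov chain), $I_{G,f}(X;YZ)\le I_{G,f}(X;Y)+I_{G,f}(X;Z)$. *)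

theory Defs
  imports "HOL-Analysis.Analysis"
begin

definition is_dist :: "'a set \<Rightarrow> ('a \<Rightarrow> real) \<Rightarrow> bool" where
  "is_dist A p \<longleftrightarrow> finite A \<and> (\<forall>x\<in>A. 0 \<le> p x) \<and> sum p A = 1"

definition abs_cont :: "'a set \<Rightarrow> ('a \<Rightarrow> real) \<Rightarrow> ('a \<Rightarrow> real) \<Rightarrow> bool" where
  "abs_cont A p q \<longleftrightarrow> (\<forall>x\<in>A. q x = 0 \<longrightarrow> p x = 0)"

text \<open>f-divergence with the convention 0 f(0/0) = 0.\<close>
definition fdiv :: "(real \<Rightarrow> real) \<Rightarrow> 'a set \<Rightarrow> ('a \<Rightarrow> real) \<Rightarrow> ('a \<Rightarrow> real) \<Rightarrow> real" where
  "fdiv f A p q = (\<Sum>x\<in>A. if q x = 0 then 0 else q x * f (p x / q x))"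

definition Dm :: "(real \<Rightarrow> real) \<Rightarrow> ereal" where
  "Dm f = ereal (f 0) + Lim at_top (\<lambda>t. ereal (f t / t))"

definition strictly_convex_at_1 :: "(real \<Rightarrow> real) \<Rightarrow> bool" where
  "strictly_convex_at_1 f \<longleftrightarrow>
     (\<forall>s t a. 0 \<le> s \<and> 0 \<le> t \<and> s \<noteq> t \<and> 0 < a \<and> a < 1 \<and> a * s + (1 - a) * t = 1
        \<longrightarrow> f 1 < a * f s + (1 - a) * f t)"

text \<open>Divergence-subadditivity; finite alphabets are represented as finite sets of naturals
  (every finite set is in bijection with one).\<close>
definition div_subadditive :: "(real \<Rightarrow> real) \<Rightarrow> (real \<Rightarrow> real) \<Rightarrow> bool" where
  "div_subadditive G f \<longleftrightarrow>
     (\<forall>(AY::nat set) (AZ::nat set) qY rY qZ rZ.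
        is_dist AY qY \<and> is_dist AY rY \<and> abs_cont AY qY rY \<and>
        is_dist AZ qZ \<and> is_dist AZ rZ \<and> abs_cont AZ qZ rZ \<longrightarrow>
        G (fdiv f (AY \<times> AZ) (\<lambda>(y,z). qY y * qZ z) (\<lambda>(y,z). rY y * rZ z))
          \<le> G (fdiv f AY qY rY) + G (fdiv f AZ qZ rZ))"

text \<open>I_{G,f}(X;Y) for X with law pX on AX and channel W (W x = p_{Y|X=x}) into AY.
  Only x with pX x > 0 matter; the minimum is over distributions q on AY for which all
  divergences are defined (p_{Y|X=x} << q), rendered as an infimum.\<close>
definition Info :: "(real \<Rightarrow> real) \<Rightarrow> (real \<Rightarrow> real) \<Rightarrow> 'a set \<Rightarrow> ('a \<Rightarrow> real)
    \<Rightarrow> 'b set \<Rightarrow> ('a \<Rightarrow> 'b \<Rightarrow> real) \<Rightarrow> real" where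
  "Info G f AX pX AY W =
     Inf ((\<lambda>q. \<Sum>x\<in>{x\<in>AX. 0 < pX x}. pX x * G (fdiv f AY (W x) q)) `
          {q. is_dist AY q \<and> (\<forall>x\<in>AX. 0 < pX x \<longrightarrow> abs_cont AY (W x) q)})"

definition info_subadditive :: "(real \<Rightarrow> real) \<Rightarrow> (real \<Rightarrow> real) \<Rightarrow> bool" where
  "info_subadditive G f \<longleftrightarrow>
     (\<forall>(AX::nat set) (AY::nat set) (AZ::nat set) pX W V.
        is_dist AX pX \<and>
        (\<forall>x\<in>AX. 0 < pX x \<longrightarrow> is_dist AY (W x) \<and> is_dist AZ (V x)) \<longrightarrow>
        Info G f AX pX (AY \<times> AZ) (\<lambda>x (y,z). W x y * V x z)
          \<le> Info G f AX pX AY W + Info G f AX pX AZ V)"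

end

theory Submission
  imports Defs
begin


locale fconv =
  fixes f :: "real \<Rightarrow> real"
  assumes f_convex: "convex_on {0..} f"
    and f_one: "f 1 = 0"
    and f_strict: "strictly_convex_at_1 f"
begin

lemma cvx:
  assumes "0 \<le> x" "0 \<le> y" "0 \<le> t" "t \<le> 1"
  shows "f ((1-t)*x + t*y) \<le> (1-t)*f x + t*f y"
  using convex_onD[OF f_convex, of t x y] assms by simp

lemma strict1:
  assumes "0 \<le> s" "0 \<le> t" "s \<noteq> t" "0 < a" "a < 1" "a * s + (1 - a) * t = 1"
  shows "0 < a * f s + (1-a) * f t"
  using f_strict assms f_one unfolding strictly_convex_at_1_def by fastforce

lemma three_slope:
  assumes "0 \<le> s" "s < 1" "1 < t"
  shows "(f 1 - f s)/(1-s) \<le> (f t - f 1)/(t-1)"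
proof -
  define m where "m = (1-s)/(t-s)"
  have m0: "0 \<le> m" "m \<le> 1" using assms by (auto simp: m_def)
  have mm: "m*(t-s) = 1-s" using assms by (simp add: m_def)
  have e: "(1-m) * s + m*t = 1" using mm by (simp add: algebra_simps)
  have "f 1 \<le> (1-m)*f s + m*f t" using cvx[OF assms(1) _ m0, of t] assms e by simp
  hence "(t-s)*f 1 \<le> (t-s)*((1-m)*f s + m*f t)" using assms by (simp add: mult_left_mono)
  also have "\<dots> = ((t-s) - m*(t-s))*f s + (m*(t-s))*f t" by (simp add: algebra_simps)
  also have "\<dots> = (t-1)*f s + (1-s)*f t" using mm by simp
  finally have *: "(t-s)*f 1 \<le> (t-1)*f s + (1-s)*f t" .
  have "(f 1 - f s)*(t-1) \<le> (f t - f 1)*(1 - s)" using * by (simp add: algebra_simps)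
  thus ?thesis using assms by (simp add: field_simps)
qed

lemma subgrad_ex: "\<exists>a. \<forall>t\<ge>0. a*(t-1) \<le> f t"
proof -
  define A where "A = {(f 1 - f s)/(1-s) | s. 0 \<le> s \<and> s < 1}"
  have ne: "A \<noteq> {}" unfolding A_def by auto
  have bdd: "\<And>x. x \<in> A \<Longrightarrow> x \<le> (f 2 - f 1)/(2-1)"
    unfolding A_def using three_slope[of _ 2] by auto
  define a where "a = Sup A"
  have "a*(t-1) \<le> f t" if t: "t \<ge> 0" for t
  proof (cases t "1::real" rule: linorder_cases)
    case less
    have "(f 1 - f t)/(1-t) \<in> A" unfolding A_def using t less by auto
    hence "(f 1 - f t)/(1-t) \<le> a" unfolding a_def
      using bdd by (intro cSup_upper) (auto simp: bdd_above_def)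
    thus ?thesis using less f_one by (simp add: field_simps)
  next
    case equal thus ?thesis using f_one by simp
  next
    case greater
    have "a \<le> (f t - f 1)/(t-1)" unfolding a_def
      using ne three_slope greater by (intro cSup_least) (auto simp: A_def)
    thus ?thesis using greater f_one by (simp add: field_simps)
  qed
  thus ?thesis by blast
qed

definition sg where "sg = (SOME a. \<forall>t\<ge>0. a*(t-1) \<le> f t)"

lemma sg: "t \<ge> 0 \<Longrightarrow> sg*(t-1) \<le> f t"
  using someI_ex[OF subgrad_ex] unfolding sg_def by blast

lemma fdiv_self: "fdiv f A p p = 0"
  unfolding fdiv_def using f_one by (intro sum.neutral) auto

lemma fdiv_nonneg:
  assumes "is_dist A p" "is_dist A q" "abs_cont A p q"
  shows "0 \<le> fdiv f A p q"
proof -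
  have "(\<Sum>x\<in>A. sg*(p x - q x)) \<le> fdiv f A p q" unfolding fdiv_def
  proof (rule sum_mono)
    fix x assume x: "x \<in> A"
    show "sg*(p x - q x) \<le> (if q x = 0 then 0 else q x * f (p x / q x))"
    proof (cases "q x = 0")
      case True thus ?thesis using assms x by (auto simp: abs_cont_def)
    next
      case False
      hence qp: "q x > 0" using assms x by (auto simp: is_dist_def less_le)
      have "sg*(p x/q x - 1) \<le> f (p x/q x)" using sg assms x qp by (simp add: is_dist_def)
      hence "q x * (sg*(p x/q x - 1)) \<le> q x * f (p x/q x)" using qp by (simp add: mult_left_mono)
      moreover have "q x * (sg*(p x/q x - 1)) = sg*(p x - q x)" using False by (simp add: field_simps)
      ultimately show ?thesis using False by simp
    qed
  qed
  moreover have "(\<Sum>x\<in>A. sg*(p x - q x)) = 0" using assms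
    by (simp add: sum_distrib_left[symmetric] sum_subtractf is_dist_def)
  ultimately show ?thesis by simp
qed

definition sl where "sl t = (f t - f 0)/t"

lemma sl_mono: assumes "0 < u" "u \<le> v" shows "sl u \<le> sl v"
proof -
  define m where "m = u/v"
  have m0: "0 \<le> m" "m \<le> 1" using assms by (auto simp: m_def)
  have "f u \<le> (1-m)*f 0 + m*f v" using cvx[of 0 v m] m0 assms by (simp add: m_def)
  hence "f u - f 0 \<le> (u/v)*(f v - f 0)" by (simp add: m_def algebra_simps)
  hence "(f u - f 0)/u \<le> (f v - f 0)/v" using assms by (simp add: field_simps)
  thus ?thesis by (simp add: sl_def)
qed

definition SS where "SS = (SUP t\<in>{0<..}. ereal (sl t))"

lemma sl_le_SS: "0 < t \<Longrightarrow> ereal (sl t) \<le> SS"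
  unfolding SS_def by (rule SUP_upper) auto

lemma SS_tendsto: "((\<lambda>t. ereal (sl t)) \<longlongrightarrow> SS) at_top"
proof (rule order_tendstoI)
  fix y assume "y < SS"
  then obtain t0 where t0: "t0 > 0" "y < ereal (sl t0)" unfolding SS_def by (auto simp: less_SUP_iff)
  show "\<forall>\<^sub>F t in at_top. y < ereal (sl t)"
    using eventually_ge_at_top[of t0]
  proof eventually_elim
    case (elim t) thus ?case using sl_mono[of t0 t] t0 by (meson ereal_less_eq(3) less_le_trans)
  qed
next
  fix y assume "SS < y"
  show "\<forall>\<^sub>F t in at_top. ereal (sl t) < y"
    using eventually_gt_at_top[of 0]
  proof eventually_elim
    case (elim t) thus ?case using sl_le_SS[of t] \<open>SS < y\<close> by simp
  qed
qed

lemma SS_not_minf: "SS \<noteq> -\<infinity>"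
  using sl_le_SS[of 1] by auto

lemma Dm_eq: "Dm f = ereal (f 0) + SS"
proof -
  have t0: "((\<lambda>t. ereal (f 0 / t)) \<longlongrightarrow> ereal 0) at_top"
    unfolding lim_ereal by (rule tendsto_divide_0[OF tendsto_const filterlim_at_top_imp_at_infinity[OF filterlim_ident]])
  have nc: "\<not> ((SS = \<infinity> \<and> ereal 0 = -\<infinity>) \<or> (SS = -\<infinity> \<and> ereal 0 = \<infinity>))"
    using SS_not_minf by simp
  have sm: "((\<lambda>t. ereal (sl t) + ereal (f 0 / t)) \<longlongrightarrow> SS + ereal 0) at_top"
    by (rule tendsto_add_ereal_general[OF nc SS_tendsto t0])
  have ev: "\<forall>\<^sub>F t in at_top. ereal (sl t) + ereal (f 0 / t) = ereal (f t / t)"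
    using eventually_gt_at_top[of 0] by eventually_elim (simp add: sl_def diff_divide_distrib)
  have lim0: "((\<lambda>t. ereal (f t / t)) \<longlongrightarrow> SS + ereal 0) at_top"
    by (rule Lim_transform_eventually[OF sm ev])
  have lim: "((\<lambda>t. ereal (f t / t)) \<longlongrightarrow> SS) at_top"
    using lim0 by simp
  have "Lim at_top (\<lambda>t. ereal (f t / t)) = SS"
    by (rule tendsto_Lim[OF _ lim]) simp
  thus ?thesis unfolding Dm_def by simp
qed

end



lemma split_pair:
  fixes q R :: "'a \<Rightarrow> real"
  assumes S: "finite S" and sq: "sum q S = sum R S" and s0: "s0 \<in> S"
    and rho: "0 < \<rho>" "\<rho> \<le> \<bar>q s0 - R s0\<bar>"
  shows "\<exists>s\<in>S. \<exists>s'\<in>S. q s \<le> R s - \<rho> / card S \<and> R s' + \<rho> / card S \<le> q s'"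
proof -
  define n where "n = card S"
  have n1: "n \<ge> 1" using S s0 by (simp add: n_def Suc_le_eq card_gt_0_iff) blast
  define r where "r = \<rho> / n"
  have rle: "r \<le> \<rho>" using n1 rho by (simp add: r_def field_simps)
  have cr: "(real n - 1) * r < \<rho>" using n1 rho by (simp add: r_def field_simps)
  have sum0: "(\<Sum>x\<in>S. q x - R x) = 0" using sq by (simp add: sum_subtractf)
  have split: "(\<Sum>x\<in>S. q x - R x) = (q s0 - R s0) + (\<Sum>x\<in>S-{s0}. q x - R x)"
    using S s0 by (simp add: sum.remove)
  have cS: "card (S - {s0}) = n - 1" using S s0 by (simp add: n_def)
  have cS': "real (card (S - {s0})) = real n - 1" using cS n1 by simp
  show ?thesis
  proof (cases "q s0 - R s0 < 0")
    case True
    hence a: "q s0 - R s0 \<le> - \<rho>" using rho by auto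
    have "\<exists>s'\<in>S. r \<le> q s' - R s'"
    proof (rule ccontr)
      assume "\<not> ?thesis"
      hence "\<forall>x\<in>S-{s0}. q x - R x \<le> r" by auto
      hence "(\<Sum>x\<in>S-{s0}. q x - R x) \<le> real (card (S-{s0})) * r"
        using sum_bounded_above[of "S-{s0}" "\<lambda>x. q x - R x" r] by simp
      hence "(\<Sum>x\<in>S-{s0}. q x - R x) \<le> (real n - 1) * r" using cS' by simp
      thus False using a split sum0 cS' cr by linarith
    qed
    then obtain s' where s': "s' \<in> S" "r \<le> q s' - R s'" by blast
    have "q s0 \<le> R s0 - r" using a rle by linarith
    moreover have "R s' + r \<le> q s'" using s' by linarith
    ultimately show ?thesis using s0 s' unfolding r_def n_def by blast
  next
    case False
    hence a: "\<rho> \<le> q s0 - R s0" using rho by auto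
    have "\<exists>s\<in>S. r \<le> R s - q s"
    proof (rule ccontr)
      assume "\<not> ?thesis"
      hence "\<forall>x\<in>S-{s0}. - r \<le> q x - R x" by auto
      hence "real (card (S-{s0})) * (-r) \<le> (\<Sum>x\<in>S-{s0}. q x - R x)"
        using sum_bounded_below[of "S-{s0}" "-r" "\<lambda>x. q x - R x"] by simp
      hence "(real n - 1) * (-r) \<le> (\<Sum>x\<in>S-{s0}. q x - R x)" using cS' by simp
      thus False using a split sum0 cS' cr by (simp add: algebra_simps)
    qed
    then obtain s where s: "s \<in> S" "r \<le> R s - q s" by blast
    have "q s \<le> R s - r" using s by linarith
    moreover have "R s0 + r \<le> q s0" using a rle by linarith
    ultimately show ?thesis using s0 s unfolding r_def n_def by blast
  qed
qed

context fconv begin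

lemma strict_line:
  assumes L: "SS = ereal L" and t: "0 < t"
  shows "f t < f 0 + t * L"
proof (rule ccontr)
  assume "\<not> ?thesis"
  hence ge: "L \<le> sl t" using t by (simp add: sl_def field_simps)
  have slL: "\<And>u. 0 < u \<Longrightarrow> sl u \<le> L" using sl_le_SS L by simp
  have eqL: "f u = f 0 + u * L" if "t \<le> u" for u
  proof -
    have "sl u = L" using sl_mono[OF t that] ge slL[of u] t that by simp
    thus ?thesis using t that by (simp add: sl_def field_simps)
  qed
  define m where "m = max t 2"
  have m2: "m \<ge> 2" "t \<le> m" by (auto simp: m_def)
  define w where "w = (m-1)/(2*m-1)"
  have w: "0 \<le> w" "w \<le> 1" using m2 by (auto simp: w_def)
  have ww: "w*(2*m-1) = m-1" using m2 by (simp add: w_def)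
  have we: "(1-w)*1 + w*(2*m) = m" using ww by (simp add: algebra_simps)
  have "f m \<le> (1-w)*f 1 + w*f (2*m)" using cvx[of 1 "2*m" w] w m2 we by simp
  hence "f 0 + m*L \<le> w*(f 0 + 2*m*L)" using eqL[of m] eqL[of "2*m"] m2 f_one by simp
  hence "(2*m-1)*(f 0 + m*L) \<le> (m-1)*(f 0 + 2*m*L)" using m2 by (simp add: w_def field_simps)
  hence "m*(f 0 + L) \<le> 0" by (simp add: algebra_simps)
  hence n: "f 0 + L \<le> 0" using m2 by (simp add: mult_le_0_iff)
  have "0 < (1 - 1/m) * f 0 + (1 - (1 - 1/m)) * f m"
    using m2 by (intro strict1) (auto simp: field_simps)
  also have "\<dots> = f 0 + L" using eqL[of m] m2 by (simp add: field_simps)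
  finally show False using n by simp
qed

lemma fdiv_lt_Dm:
  assumes p: "is_dist A p" and q: "is_dist A q" and ac: "abs_cont A p q"
  shows "ereal (fdiv f A p q) < Dm f"
proof (cases SS)
  case PInf thus ?thesis by (simp add: Dm_eq)
next
  case MInf thus ?thesis using SS_not_minf by simp
next
  case (real L)
  have fin: "finite A" using p by (simp add: is_dist_def)
  obtain x0 where x0: "x0 \<in> A" "0 < p x0"
  proof (rule ccontr)
    assume "\<not> thesis"
    hence "\<forall>x\<in>A. p x \<le> 0" using that by force
    hence "sum p A \<le> 0" by (simp add: sum_nonpos)
    thus False using p by (simp add: is_dist_def)
  qed
  have "fdiv f A p q < (\<Sum>x\<in>A. q x * f 0 + p x * L)" unfolding fdiv_def
  proof (rule sum_strict_mono_ex1[OF fin])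
    show "\<forall>x\<in>A. (if q x = 0 then 0 else q x * f (p x / q x)) \<le> q x * f 0 + p x * L"
    proof
      fix x assume x: "x \<in> A"
      show "(if q x = 0 then 0 else q x * f (p x / q x)) \<le> q x * f 0 + p x * L"
      proof (cases "q x = 0")
        case True thus ?thesis using ac x by (simp add: abs_cont_def)
      next
        case False
        hence qp: "0 < q x" using q x by (simp add: is_dist_def less_le)
        show ?thesis
        proof (cases "p x = 0")
          case True thus ?thesis by simp
        next
          case False
          hence "0 < p x / q x" using p x qp by (simp add: is_dist_def less_le)
          hence "f (p x / q x) < f 0 + (p x / q x) * L" by (rule strict_line[OF real])
          hence "q x * f (p x / q x) < q x * (f 0 + (p x / q x) * L)" using qp by simp
          moreover have "q x * (f 0 + (p x / q x) * L) = q x * f 0 + p x * L" using qp by (simp add: field_simps)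
          ultimately have "q x * f (p x / q x) \<le> q x * f 0 + p x * L" by linarith
          thus ?thesis using qp by simp
        qed
      qed
    qed
    have qp: "0 < q x0" using ac x0 q by (auto simp: abs_cont_def is_dist_def less_le)
    have "0 < p x0 / q x0" using x0 qp by simp
    hence "f (p x0 / q x0) < f 0 + (p x0 / q x0) * L" by (rule strict_line[OF real])
    hence "q x0 * f (p x0 / q x0) < q x0 * (f 0 + (p x0 / q x0) * L)" using qp by simp
    moreover have "q x0 * (f 0 + (p x0 / q x0) * L) = q x0 * f 0 + p x0 * L" using qp by (simp add: field_simps)
    ultimately have "q x0 * f (p x0 / q x0) < q x0 * f 0 + p x0 * L" by linarith
    hence "(if q x0 = 0 then 0 else q x0 * f (p x0 / q x0)) < q x0 * f 0 + p x0 * L"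
      using qp by simp
    thus "\<exists>x\<in>A. (if q x = 0 then 0 else q x * f (p x / q x)) < q x * f 0 + p x * L"
      using x0 by blast
  qed
  also have "\<dots> = f 0 + L" using p q
    by (simp add: sum.distrib sum_distrib_right[symmetric] is_dist_def)
  finally show ?thesis by (simp add: Dm_eq real)
qed

end



context fconv begin

definition g where "g t = f t - sg*(t-1)"

lemma g_nonneg: "0 \<le> t \<Longrightarrow> 0 \<le> g t"
  using sg[of t] by (simp add: g_def)

lemma g_dec:
  assumes "0 \<le> t" "t \<le> t1" "t1 < 1"
  shows "g t1 \<le> g t"
proof (cases "t = t1")
  case True thus ?thesis by simp
next
  case False
  hence tt: "t < t1" using assms by simp
  define \<mu> where "\<mu> = (1-t1)/(1-t)"
  have mu: "0 \<le> \<mu>" "\<mu> \<le> 1" using assms tt by (auto simp: \<mu>_def)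
  have m1: "\<mu>*(1-t) = 1-t1" using assms tt by (simp add: \<mu>_def)
  have e: "(1-\<mu>)*1 + \<mu>*t = t1" using m1 by (simp add: algebra_simps)
  have "f t1 \<le> (1-\<mu>)*f 1 + \<mu>*f t" using cvx[of 1 t \<mu>] mu assms e by simp
  hence ft: "f t1 \<le> \<mu>*f t" using f_one by simp
  have d: "t1 - 1 = \<mu>*(t-1)" using m1 by (simp add: algebra_simps)
  have "g t1 = f t1 - \<mu>*(sg*(t-1))" by (simp add: g_def d mult_ac)
  also have "\<dots> \<le> \<mu>*f t - \<mu>*(sg*(t-1))" using ft by simp
  also have "\<dots> = \<mu> * g t" by (simp add: g_def right_diff_distrib)
  finally have "g t1 \<le> \<mu> * g t" .
  also have "\<dots> \<le> g t" using mu g_nonneg[of t] assms by (simp add: mult_left_le_one_le)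
  finally show ?thesis .
qed

lemma g_inc:
  assumes "1 < t2" "t2 \<le> t"
  shows "g t2 / t2 \<le> g t / t"
proof (cases "t = t2")
  case True thus ?thesis by simp
next
  case False
  hence tt: "t2 < t" using assms by simp
  define \<mu> where "\<mu> = (t2-1)/(t-1)"
  have mu: "0 \<le> \<mu>" "\<mu> \<le> 1" using assms tt by (auto simp: \<mu>_def)
  have m1: "\<mu>*(t-1) = t2-1" using assms tt by (simp add: \<mu>_def)
  have e: "(1-\<mu>)*1 + \<mu>*t = t2" using m1 by (simp add: algebra_simps)
  have "f t2 \<le> (1-\<mu>)*f 1 + \<mu>*f t" using cvx[of 1 t \<mu>] mu assms e by simp
  hence ft: "f t2 \<le> \<mu>*f t" using f_one by simp
  have "g t2 = f t2 - \<mu>*(sg*(t-1))" by (simp add: g_def m1[symmetric] mult_ac)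
  also have "\<dots> \<le> \<mu>*f t - \<mu>*(sg*(t-1))" using ft by simp
  also have "\<dots> = \<mu> * g t" by (simp add: g_def right_diff_distrib)
  finally have a: "g t2 \<le> \<mu> * g t" .
  have gt: "0 \<le> g t" using g_nonneg assms by simp
  have "\<mu> * t = \<mu> + t2 - 1" using m1 by (simp add: algebra_simps)
  hence "\<mu> * t \<le> t2" using mu by linarith
  hence "\<mu> / t2 \<le> 1 / t" using assms by (simp add: field_simps)
  hence "\<mu> * g t / t2 \<le> g t / t" using gt
    by (metis mult_right_mono times_divide_eq_left mult_1)
  moreover have "g t2 / t2 \<le> \<mu> * g t / t2" using a assms by (simp add: divide_right_mono)
  ultimately show ?thesis by linarith
qed

lemma g_pair_pos:
  assumes "0 \<le> t1" "t1 < 1" "1 < t2"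
  shows "0 < g t1 \<or> 0 < g t2"
proof -
  define \<alpha> where "\<alpha> = (t2-1)/(t2-t1)"
  have a: "0 < \<alpha>" "\<alpha> < 1" using assms by (auto simp: \<alpha>_def field_simps)
  have am: "\<alpha>*(t2-t1) = t2-1" using assms by (simp add: \<alpha>_def)
  have e: "\<alpha> * t1 + (1 - \<alpha>) * t2 = 1" using am by (simp add: algebra_simps)
  have "0 < \<alpha> * f t1 + (1 - \<alpha>) * f t2" using assms a e by (intro strict1) auto
  also have "\<dots> = \<alpha> * g t1 + (1-\<alpha>) * g t2 + sg*(\<alpha> * t1 + (1 - \<alpha>) * t2 - 1)"
    by (simp add: g_def algebra_simps)
  also have "\<dots> = \<alpha> * g t1 + (1-\<alpha>) * g t2" using e by simp
  finally have "0 < \<alpha> * g t1 + (1-\<alpha>) * g t2" .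
  show ?thesis
  proof (rule ccontr)
    assume "\<not> ?thesis"
    hence "g t1 \<le> 0" "g t2 \<le> 0" by auto
    hence "\<alpha> * g t1 \<le> 0" "(1-\<alpha>)*g t2 \<le> 0" using a by (auto simp: mult_nonneg_nonpos)
    thus False using \<open>0 < \<alpha> * g t1 + (1-\<alpha>) * g t2\<close> by linarith
  qed
qed

lemma fdiv_g:
  assumes fin: "finite S" and q: "\<forall>s\<in>S. 0 < q s" and sq: "sum q S = sum R S"
  shows "fdiv f S R q = (\<Sum>s\<in>S. q s * g (R s / q s))"
proof -
  have "fdiv f S R q = (\<Sum>s\<in>S. q s * g (R s / q s) + sg * (R s - q s))"
    unfolding fdiv_def
  proof (rule sum.cong)
    fix s assume s: "s \<in> S"
    have qn: "q s \<noteq> 0" using q s by force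
    have "q s * g (R s / q s) = q s * f (R s / q s) - sg * (R s - q s)"
      using qn by (simp add: g_def right_diff_distrib mult_ac)
    hence "q s * g (R s / q s) + sg * (R s - q s) = q s * f (R s / q s)" by simp
    thus "(if q s = 0 then 0 else q s * f (R s / q s)) = q s * g (R s / q s) + sg * (R s - q s)"
      using q s by (metis less_irrefl)
  qed simp
  also have "\<dots> = (\<Sum>s\<in>S. q s * g (R s / q s))"
    using sq by (simp add: sum.distrib sum_distrib_left[symmetric] sum_subtractf)
  finally show ?thesis .
qed

lemma near:
  assumes fin: "finite S" and Rp: "\<forall>s\<in>S. 0 < R s" and rho: "0 < \<rho>"
  shows "\<exists>\<delta>>0. \<forall>q. (\<forall>s\<in>S. 0 < q s) \<and> sum q S = sum R S \<and> (\<exists>s\<in>S. \<rho> \<le> \<bar>q s - R s\<bar>)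
            \<longrightarrow> \<delta> \<le> fdiv f S R q"
proof -
  define r where "r = \<rho> / card S"
  define t1 where "t1 s' = R s' / (R s' + r)" for s'
  define t2 where "t2 s = R s / (R s - r)" for s
  define val where "val p = R (fst p) * g (t2 (fst p)) / t2 (fst p) + R (snd p) * g (t1 (snd p))" for p
  define P where "P = {p \<in> S \<times> S. r < R (fst p)}"
  define \<delta> where "\<delta> = Min (insert 1 (val ` P))"
  have r0: "0 \<le> r" using rho by (simp add: r_def)
  have finP: "finite P" using fin by (simp add: P_def)
  have valpos: "0 < val p" if "p \<in> P" for p
  proof -
    obtain s s' where p0: "p = (s, s')" by (cases p)
    have p: "s \<in> S" "s' \<in> S" "r < R s" using that p0 by (auto simp: P_def)
    have Rs: "0 < R s" "0 < R s'" using Rp p by auto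
    have "card S > 0" using p fin card_gt_0_iff by blast
    hence rp: "0 < r" using rho by (simp add: r_def)
    have T1: "0 \<le> t1 s'" "t1 s' < 1" using Rs rp by (auto simp: t1_def field_simps)
    have T2: "1 < t2 s" using Rs p rp by (auto simp: t2_def field_simps)
    hence g2: "0 \<le> g (t2 s)" using g_nonneg by simp
    have g1: "0 \<le> g (t1 s')" using g_nonneg T1 by simp
    have a: "0 \<le> R s * g (t2 s) / t2 s" using Rs g2 T2 by simp
    have b: "0 \<le> R s' * g (t1 s')" using Rs g1 by simp
    from g_pair_pos[OF T1 T2] show ?thesis
    proof
      assume "0 < g (t1 s')" hence "0 < R s' * g (t1 s')" using Rs by simp
      thus ?thesis using a by (simp add: val_def p0)
    next
      assume "0 < g (t2 s)" hence "0 < R s * g (t2 s) / t2 s" using Rs T2 by simp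
      thus ?thesis using b by (simp add: val_def p0)
    qed
  qed
  have dpos: "0 < \<delta>" unfolding \<delta>_def using finP valpos by (subst Min_gr_iff) auto
  have "\<delta> \<le> fdiv f S R q" if q: "\<forall>s\<in>S. 0 < q s" and sq: "sum q S = sum R S"
      and ex: "\<exists>s\<in>S. \<rho> \<le> \<bar>q s - R s\<bar>" for q
  proof -
    obtain s0 where s0: "s0 \<in> S" "\<rho> \<le> \<bar>q s0 - R s0\<bar>" using ex by blast
    obtain s s' where ss: "s \<in> S" "s' \<in> S" "q s \<le> R s - r" "R s' + r \<le> q s'"
      using split_pair[OF fin sq s0(1) rho s0(2)] unfolding r_def by blast
    have Rs: "0 < R s" "0 < R s'" using Rp ss by auto
    have qs: "0 < q s" "0 < q s'" using q ss by auto
    have rR: "r < R s" using ss qs by simp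
    have inP: "(s, s') \<in> P" using ss rR by (simp add: P_def)
    have "card S > 0" using ss fin card_gt_0_iff by blast
    hence rp: "0 < r" using rho by (simp add: r_def)
    have neq: "s \<noteq> s'" using ss rp qs by auto
    have T2: "1 < t2 s" using Rs rR rp by (auto simp: t2_def field_simps)
    have tt2: "t2 s \<le> R s / q s" unfolding t2_def using Rs rR qs ss
      by (intro divide_left_mono) auto
    have "q s * g (R s / q s) = R s * (g (R s / q s) / (R s / q s))" using qs Rs by simp
    also have "\<dots> \<ge> R s * (g (t2 s) / t2 s)" by (intro mult_left_mono g_inc[OF T2 tt2]) (use Rs in simp)
    finally have A: "R s * g (t2 s) / t2 s \<le> q s * g (R s / q s)" by simp
    have T1: "0 \<le> t1 s'" "t1 s' < 1" using Rs rp by (auto simp: t1_def field_simps)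
    have tt1: "R s' / q s' \<le> t1 s'" unfolding t1_def using Rs ss r0
      by (intro divide_left_mono) auto
    have gg: "g (t1 s') \<le> g (R s' / q s')" using g_dec[OF _ tt1 T1(2)] Rs qs by simp
    have "R s' * g (t1 s') \<le> R s' * g (R s' / q s')" using gg Rs by simp
    also have "\<dots> \<le> q s' * g (R s' / q s')" using ss r0 g_nonneg[of "R s' / q s'"] Rs qs
      by (intro mult_right_mono) auto
    finally have B: "R s' * g (t1 s') \<le> q s' * g (R s' / q s')" .
    have "\<delta> \<le> val (s, s')" unfolding \<delta>_def using finP inP by (intro Min_le) auto
    also have "\<dots> \<le> q s * g (R s / q s) + q s' * g (R s' / q s')" using A B by (simp add: val_def)
    also have "\<dots> = (\<Sum>x\<in>{s,s'}. q x * g (R x / q x))" using neq by simp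
    also have "\<dots> \<le> (\<Sum>x\<in>S. q x * g (R x / q x))"
    proof (rule sum_mono2[OF fin])
      show "{s, s'} \<subseteq> S" using ss by auto
      fix b assume b: "b \<in> S - {s, s'}"
      hence "0 < q b" "0 < R b" using q Rp by auto
      thus "0 \<le> q b * g (R b / q b)" using g_nonneg[of "R b / q b"] by simp
    qed
    also have "\<dots> = fdiv f S R q" using fdiv_g[OF fin q sq] by simp
    finally show ?thesis .
  qed
  thus ?thesis using dpos by blast
qed

lemma f_cont: "0 < x \<Longrightarrow> isCont f x"
proof -
  have "continuous_on {0<..} f"
  proof (rule convex_on_continuous)
    show "convex_on {0<..} f" by (rule convex_on_subset[OF f_convex]) (auto simp: convex_real_interval)
  qed auto
  thus "0 < x \<Longrightarrow> isCont f x" using continuous_on_eq_continuous_at[of "{0<..}" f] by auto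
qed

lemma contq:
  assumes fin: "finite S" and Rp: "\<forall>s\<in>S. 0 < R s" and Pn: "\<forall>s\<in>S. 0 \<le> P s" and eta: "0 < \<eta>"
  shows "\<exists>\<rho>>0. \<forall>q. (\<forall>s\<in>S. 0 < q s \<and> \<bar>q s - R s\<bar> < \<rho>) \<longrightarrow> fdiv f S P R - \<eta> < fdiv f S P q"
proof (cases "S = {}")
  case True thus ?thesis using eta by (auto simp: fdiv_def intro!: exI[of _ 1])
next
  case False
  define e where "e = \<eta> / card S"
  have e0: "0 < e" using eta fin False by (simp add: e_def card_gt_0_iff)
  define h where "h s u = u * f (P s / u)" for s u
  have "\<exists>d>0. \<forall>u. \<bar>u - R s\<bar> < d \<longrightarrow> \<bar>h s u - h s (R s)\<bar> < e" if s: "s \<in> S" for s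
  proof -
    have ic: "isCont (h s) (R s)"
    proof (cases "P s = 0")
      case True
      hence "h s = (\<lambda>u. u * f 0)" by (simp add: h_def fun_eq_iff)
      thus ?thesis by (simp add: continuous_intros)
    next
      case False
      hence pp: "0 < P s / R s" using Pn Rp s by (simp add: less_le)
      have c1: "isCont (\<lambda>u. P s / u) (R s)" using Rp s by (intro continuous_intros) auto
      have "isCont (\<lambda>u. f (P s / u)) (R s)" using isCont_o2[OF c1, of f] f_cont[OF pp] by simp
      thus ?thesis unfolding h_def by (intro continuous_intros)
    qed
    then obtain d where d0: "d > 0" and dd: "\<forall>u. u \<noteq> R s \<and> norm (u - R s) < d \<longrightarrow> norm (h s u - h s (R s)) < e"
      using e0 unfolding isCont_def LIM_eq by blast
    have "\<forall>u. \<bar>u - R s\<bar> < d \<longrightarrow> \<bar>h s u - h s (R s)\<bar> < e"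
    proof (intro allI impI)
      fix u assume u: "\<bar>u - R s\<bar> < d"
      show "\<bar>h s u - h s (R s)\<bar> < e"
      proof (cases "u = R s")
        case True thus ?thesis using e0 by simp
      next
        case False thus ?thesis using dd u by simp
      qed
    qed
    thus ?thesis using d0 by blast
  qed
  then obtain d where d: "\<forall>s\<in>S. d s > 0 \<and> (\<forall>u. \<bar>u - R s\<bar> < d s \<longrightarrow> \<bar>h s u - h s (R s)\<bar> < e)"
    by metis
  define \<rho> where "\<rho> = Min (d ` S)"
  have rho0: "0 < \<rho>" unfolding \<rho>_def using fin False d by (subst Min_gr_iff) auto
  have "fdiv f S P R - \<eta> < fdiv f S P q" if q: "\<forall>s\<in>S. 0 < q s \<and> \<bar>q s - R s\<bar> < \<rho>" for q
  proof -
    have "fdiv f S P R = (\<Sum>s\<in>S. h s (R s))" unfolding fdiv_def h_def using Rp by (intro sum.cong) auto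
    hence "fdiv f S P R - \<eta> = (\<Sum>s\<in>S. h s (R s) - e)"
      using fin False by (simp add: sum_subtractf e_def)
    also have "\<dots> < (\<Sum>s\<in>S. h s (q s))"
    proof (rule sum_strict_mono[OF fin False])
      fix s assume s: "s \<in> S"
      have "\<rho> \<le> d s" unfolding \<rho>_def using fin s by simp
      moreover have "\<bar>q s - R s\<bar> < \<rho>" using q s by blast
      ultimately have "\<bar>q s - R s\<bar> < d s" by linarith
      hence "\<bar>h s (q s) - h s (R s)\<bar> < e" using d s by blast
      thus "h s (R s) - e < h s (q s)" by linarith
    qed
    also have "\<dots> = fdiv f S P q" unfolding fdiv_def h_def using q by (intro sum.cong) auto
    finally show ?thesis .
  qed
  thus ?thesis using rho0 by blast
qed

end



lemma is_dist_prod: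
  assumes "is_dist A p" "is_dist B q"
  shows "is_dist (A \<times> B) (\<lambda>(y,z). p y * q z)"
proof -
  have "(\<Sum>(y,z)\<in>A \<times> B. p y * q z) = (\<Sum>y\<in>A. \<Sum>z\<in>B. p y * q z)"
    by (simp add: sum.cartesian_product)
  also have "\<dots> = sum p A * sum q B" by (simp add: sum_product)
  finally show ?thesis using assms by (auto simp: is_dist_def)
qed

lemma is_dist_pos_ex:
  assumes "is_dist A p" shows "\<exists>x\<in>A. 0 < p x"
proof (rule ccontr)
  assume "\<not> ?thesis"
  hence "\<forall>x\<in>A. p x \<le> 0" by force
  hence "sum p A \<le> 0" by (simp add: sum_nonpos)
  thus False using assms by (simp add: is_dist_def)
qed

lemma info_set_ne:
  assumes pX: "is_dist AX pX" and W: "\<forall>x\<in>AX. 0 < pX x \<longrightarrow> is_dist AY (W x)"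
  shows "{q. is_dist AY q \<and> (\<forall>x\<in>AX. 0 < pX x \<longrightarrow> abs_cont AY (W x) q)} \<noteq> {}"
proof -
  obtain x0 where x0: "x0 \<in> AX" "0 < pX x0" using is_dist_pos_ex[OF pX] by blast
  have finY: "finite AY" using W x0 by (auto simp: is_dist_def)
  have finX: "finite AX" using pX by (simp add: is_dist_def)
  define q where "q y = (\<Sum>x\<in>AX. pX x * W x y)" for y
  have tnn: "0 \<le> pX x * W x y" if "x \<in> AX" "y \<in> AY" for x y
  proof (cases "0 < pX x")
    case True thus ?thesis using W that by (simp add: is_dist_def)
  next
    case False
    have "0 \<le> pX x" using pX that by (simp add: is_dist_def)
    hence "pX x = 0" using False by linarith
    thus ?thesis by simp
  qed
  have rowsum: "(\<Sum>y\<in>AY. pX x * W x y) = pX x" if "x \<in> AX" for x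
  proof (cases "0 < pX x")
    case True
    have "(\<Sum>y\<in>AY. pX x * W x y) = pX x * sum (W x) AY" by (rule sum_distrib_left[symmetric])
    also have "\<dots> = pX x" using W that True by (simp add: is_dist_def)
    finally show ?thesis .
  next
    case False
    have "0 \<le> pX x" using pX that by (simp add: is_dist_def)
    hence "pX x = 0" using False by linarith
    thus ?thesis by simp
  qed
  have "sum q AY = (\<Sum>x\<in>AX. \<Sum>y\<in>AY. pX x * W x y)" unfolding q_def by (rule sum.swap)
  also have "\<dots> = sum pX AX" using rowsum by simp
  finally have sq1: "sum q AY = 1" using pX by (simp add: is_dist_def)
  have qnn: "\<forall>y\<in>AY. 0 \<le> q y"
  proof
    fix y assume y: "y \<in> AY"
    show "0 \<le> q y" unfolding q_def by (rule sum_nonneg) (use tnn y in blast)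
  qed
  have "is_dist AY q" using finY sq1 qnn by (simp add: is_dist_def)
  moreover have "abs_cont AY (W x) q" if "x \<in> AX" "0 < pX x" for x
    unfolding abs_cont_def
  proof (intro ballI impI)
    fix y assume y: "y \<in> AY" and "q y = 0"
    hence s0: "(\<Sum>x\<in>AX. pX x * W x y) = 0" by (simp add: q_def)
    have nn: "\<And>x. x \<in> AX \<Longrightarrow> 0 \<le> pX x * W x y" using tnn y by blast
    have "\<forall>x\<in>AX. pX x * W x y = 0" using sum_nonneg_eq_0_iff[OF finX nn] s0 by simp
    hence "pX x * W x y = 0" using that(1) by blast
    thus "W x y = 0" using that(2) by simp
  qed
  ultimately show ?thesis by blast
qed

locale fG = fconv +
  fixes G :: "real \<Rightarrow> real"
  assumes G_cont: "continuous_on {x. 0 \<le> x \<and> ereal x < Dm f} G"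
    and G_mono: "mono_on {x. 0 \<le> x \<and> ereal x < Dm f} G"
    and G_nonneg: "\<forall>x. 0 \<le> x \<and> ereal x < Dm f \<longrightarrow> 0 \<le> G x"
    and G_zero: "G 0 = 0"
    and G_pos: "\<forall>x. 0 < x \<and> ereal x < Dm f \<longrightarrow> 0 < G x"
begin

lemma fd_dom:
  assumes "is_dist A p" "is_dist A q" "abs_cont A p q"
  shows "fdiv f A p q \<in> {x. 0 \<le> x \<and> ereal x < Dm f}"
  using fdiv_nonneg[OF assms] fdiv_lt_Dm[OF assms] by simp

lemma G_fd_nonneg:
  assumes "is_dist A p" "is_dist A q" "abs_cont A p q"
  shows "0 \<le> G (fdiv f A p q)"
  using fd_dom[OF assms] G_nonneg by simp

lemma info_vals_nonneg:
  assumes "is_dist AX pX" "\<forall>x\<in>AX. 0 < pX x \<longrightarrow> is_dist AY (W x)"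
    and "q \<in> {q. is_dist AY q \<and> (\<forall>x\<in>AX. 0 < pX x \<longrightarrow> abs_cont AY (W x) q)}"
  shows "0 \<le> (\<Sum>x\<in>{x\<in>AX. 0 < pX x}. pX x * G (fdiv f AY (W x) q))"
proof (rule sum_nonneg)
  fix x assume x: "x \<in> {x\<in>AX. 0 < pX x}"
  have "0 \<le> G (fdiv f AY (W x) q)" using x assms by (intro G_fd_nonneg) auto
  thus "0 \<le> pX x * G (fdiv f AY (W x) q)" using x by simp
qed

lemma info_bdd:
  assumes "is_dist AX pX" "\<forall>x\<in>AX. 0 < pX x \<longrightarrow> is_dist AY (W x)"
  shows "bdd_below ((\<lambda>q. \<Sum>x\<in>{x\<in>AX. 0 < pX x}. pX x * G (fdiv f AY (W x) q)) `
          {q. is_dist AY q \<and> (\<forall>x\<in>AX. 0 < pX x \<longrightarrow> abs_cont AY (W x) q)})"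
  using info_vals_nonneg[OF assms] by (intro bdd_belowI[of _ 0]) blast

lemma Info_le:
  assumes "is_dist AX pX" "\<forall>x\<in>AX. 0 < pX x \<longrightarrow> is_dist AY (W x)"
    and "is_dist AY q" "\<forall>x\<in>AX. 0 < pX x \<longrightarrow> abs_cont AY (W x) q"
  shows "Info G f AX pX AY W \<le> (\<Sum>x\<in>{x\<in>AX. 0 < pX x}. pX x * G (fdiv f AY (W x) q))"
  unfolding Info_def using assms by (intro cInf_lower info_bdd) auto

lemma Info_approx:
  assumes "is_dist AX pX" "\<forall>x\<in>AX. 0 < pX x \<longrightarrow> is_dist AY (W x)" and e: "0 < e"
  shows "\<exists>q. is_dist AY q \<and> (\<forall>x\<in>AX. 0 < pX x \<longrightarrow> abs_cont AY (W x) q) \<and>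
     (\<Sum>x\<in>{x\<in>AX. 0 < pX x}. pX x * G (fdiv f AY (W x) q)) < Info G f AX pX AY W + e"
proof -
  have "Info G f AX pX AY W < Info G f AX pX AY W + e" using e by simp
  hence "\<exists>v\<in>((\<lambda>q. \<Sum>x\<in>{x\<in>AX. 0 < pX x}. pX x * G (fdiv f AY (W x) q)) `
          {q. is_dist AY q \<and> (\<forall>x\<in>AX. 0 < pX x \<longrightarrow> abs_cont AY (W x) q)}). v < Info G f AX pX AY W + e"
    unfolding Info_def
    using info_set_ne[OF assms(1,2)] info_bdd[OF assms(1,2)] by (subst (asm) cInf_less_iff) auto
  thus ?thesis by auto
qed

end



lemma restrict_supp:
  assumes q: "is_dist A q" and r: "is_dist A r" and ac: "abs_cont A q r"
  shows "is_dist {y\<in>A. 0 < r y} q" "is_dist {y\<in>A. 0 < r y} r" "abs_cont {y\<in>A. 0 < r y} q r"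
    "fdiv f {y\<in>A. 0 < r y} q r = fdiv f A q r" "\<forall>y\<in>{y\<in>A. 0 < r y}. 0 < r y"
proof -
  have fin: "finite A" using q by (simp add: is_dist_def)
  have z: "r y = 0 \<and> q y = 0" if "y \<in> A - {y\<in>A. 0 < r y}" for y
  proof -
    have "0 \<le> r y" using r that by (simp add: is_dist_def)
    hence "r y = 0" using that by auto
    thus ?thesis using ac that by (auto simp: abs_cont_def)
  qed
  have sq: "sum q {y\<in>A. 0 < r y} = sum q A" using z fin by (intro sum.mono_neutral_left) auto
  have sr: "sum r {y\<in>A. 0 < r y} = sum r A" using z fin by (intro sum.mono_neutral_left) auto
  show "is_dist {y\<in>A. 0 < r y} q" using q sq fin by (auto simp: is_dist_def)
  show "is_dist {y\<in>A. 0 < r y} r" using r sr fin by (auto simp: is_dist_def)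
  show "abs_cont {y\<in>A. 0 < r y} q r" using ac by (auto simp: abs_cont_def)
  show "fdiv f {y\<in>A. 0 < r y} q r = fdiv f A q r" unfolding fdiv_def
    using z fin by (intro sum.mono_neutral_left) auto
  show "\<forall>y\<in>{y\<in>A. 0 < r y}. 0 < r y" by auto
qed

context fG begin

lemma div_to_info:
  assumes ds: "div_subadditive G f"
  shows "info_subadditive G f"
  unfolding info_subadditive_def
proof (intro allI impI)
  fix AX AY AZ :: "nat set" and pX W V
  assume h: "is_dist AX pX \<and> (\<forall>x\<in>AX. 0 < pX x \<longrightarrow> is_dist AY (W x) \<and> is_dist AZ (V x))"
  hence pX: "is_dist AX pX" and hW: "\<forall>x\<in>AX. 0 < pX x \<longrightarrow> is_dist AY (W x)"
    and hV: "\<forall>x\<in>AX. 0 < pX x \<longrightarrow> is_dist AZ (V x)" by auto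
  define WV where "WV = (\<lambda>x (y::nat, z::nat). W x y * V x z)"
  have hWV: "\<forall>x\<in>AX. 0 < pX x \<longrightarrow> is_dist (AY \<times> AZ) (WV x)"
  proof (intro ballI impI)
    fix x assume x: "x \<in> AX" "0 < pX x"
    have "is_dist AY (W x)" "is_dist AZ (V x)" using hW hV x by auto
    from is_dist_prod[OF this] show "is_dist (AY \<times> AZ) (WV x)" by (simp add: WV_def)
  qed
  define Xp where "Xp = {x\<in>AX. 0 < pX x}"
  have "Info G f AX pX (AY \<times> AZ) WV \<le> Info G f AX pX AY W + Info G f AX pX AZ V"
  proof (rule field_le_epsilon)
    fix e :: real assume e: "0 < e"
    obtain qY where qY: "is_dist AY qY" "\<forall>x\<in>AX. 0 < pX x \<longrightarrow> abs_cont AY (W x) qY"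
      "(\<Sum>x\<in>Xp. pX x * G (fdiv f AY (W x) qY)) < Info G f AX pX AY W + e/2"
      using Info_approx[OF pX hW, of "e/2"] e unfolding Xp_def by auto
    obtain qZ where qZ: "is_dist AZ qZ" "\<forall>x\<in>AX. 0 < pX x \<longrightarrow> abs_cont AZ (V x) qZ"
      "(\<Sum>x\<in>Xp. pX x * G (fdiv f AZ (V x) qZ)) < Info G f AX pX AZ V + e/2"
      using Info_approx[OF pX hV, of "e/2"] e unfolding Xp_def by auto
    define q where "q = (\<lambda>(y::nat, z::nat). qY y * qZ z)"
    have q: "is_dist (AY \<times> AZ) q" unfolding q_def by (rule is_dist_prod[OF qY(1) qZ(1)])
    have acq: "\<forall>x\<in>AX. 0 < pX x \<longrightarrow> abs_cont (AY \<times> AZ) (WV x) q"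
      using qY(2) qZ(2) by (auto simp: abs_cont_def q_def WV_def)
    have "Info G f AX pX (AY \<times> AZ) WV \<le> (\<Sum>x\<in>Xp. pX x * G (fdiv f (AY \<times> AZ) (WV x) q))"
      unfolding Xp_def by (rule Info_le[OF pX hWV q acq])
    also have "\<dots> \<le> (\<Sum>x\<in>Xp. pX x * G (fdiv f AY (W x) qY) + pX x * G (fdiv f AZ (V x) qZ))"
    proof (rule sum_mono)
      fix x assume x: "x \<in> Xp"
      hence xx: "x \<in> AX" "0 < pX x" by (auto simp: Xp_def)
      have "G (fdiv f (AY \<times> AZ) (\<lambda>(y,z). W x y * V x z) (\<lambda>(y,z). qY y * qZ z))
          \<le> G (fdiv f AY (W x) qY) + G (fdiv f AZ (V x) qZ)"
      proof -
        have pre: "is_dist AY (W x) \<and> is_dist AY qY \<and> abs_cont AY (W x) qY \<and>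
            is_dist AZ (V x) \<and> is_dist AZ qZ \<and> abs_cont AZ (V x) qZ"
          using xx hW hV qY(1,2) qZ(1,2) by simp
        show ?thesis using ds[unfolded div_subadditive_def, rule_format, OF pre] .
      qed
      hence "G (fdiv f (AY \<times> AZ) (WV x) q) \<le> G (fdiv f AY (W x) qY) + G (fdiv f AZ (V x) qZ)"
        by (simp add: WV_def q_def)
      hence "pX x * G (fdiv f (AY \<times> AZ) (WV x) q) \<le> pX x * (G (fdiv f AY (W x) qY) + G (fdiv f AZ (V x) qZ))"
        using xx by (intro mult_left_mono) auto
      thus "pX x * G (fdiv f (AY \<times> AZ) (WV x) q) \<le> pX x * G (fdiv f AY (W x) qY) + pX x * G (fdiv f AZ (V x) qZ)"
        by (simp add: distrib_left)
    qed
    also have "\<dots> = (\<Sum>x\<in>Xp. pX x * G (fdiv f AY (W x) qY)) + (\<Sum>x\<in>Xp. pX x * G (fdiv f AZ (V x) qZ))"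
      by (rule sum.distrib)
    also have "\<dots> \<le> Info G f AX pX AY W + Info G f AX pX AZ V + e" using qY(3) qZ(3) by simp
    finally show "Info G f AX pX (AY \<times> AZ) WV \<le> Info G f AX pX AY W + Info G f AX pX AZ V + e" .
  qed
  thus "Info G f AX pX (AY \<times> AZ) (\<lambda>x (y, z). W x y * V x z) \<le> Info G f AX pX AY W + Info G f AX pX AZ V"
    by (simp add: WV_def)
qed

end



context fG begin

lemma core:
  fixes AY AZ :: "nat set"
  assumes isub: "info_subadditive G f"
    and Y: "is_dist AY qY" "is_dist AY rY" "abs_cont AY qY rY" "\<forall>y\<in>AY. 0 < rY y"
    and Z: "is_dist AZ qZ" "is_dist AZ rZ" "abs_cont AZ qZ rZ" "\<forall>z\<in>AZ. 0 < rZ z"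
  shows "G (fdiv f (AY \<times> AZ) (\<lambda>(y,z). qY y * qZ z) (\<lambda>(y,z). rY y * rZ z))
           \<le> G (fdiv f AY qY rY) + G (fdiv f AZ qZ rZ)"
proof -
  define S where "S = AY \<times> AZ"
  define P where "P = (\<lambda>(y::nat, z::nat). qY y * qZ z)"
  define R where "R = (\<lambda>(y::nat, z::nat). rY y * rZ z)"
  have P: "is_dist S P" unfolding S_def P_def by (rule is_dist_prod[OF Y(1) Z(1)])
  have R: "is_dist S R" unfolding S_def R_def by (rule is_dist_prod[OF Y(2) Z(2)])
  have finS: "finite S" using P by (simp add: is_dist_def)
  have Rpos: "\<forall>s\<in>S. 0 < R s" using Y(4) Z(4) by (auto simp: S_def R_def)
  have acPR: "abs_cont S P R" using Rpos by (auto simp: abs_cont_def)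
  have acRR: "abs_cont S R R" by (simp add: abs_cont_def)
  have Pnn: "\<forall>s\<in>S. 0 \<le> P s" using P by (simp add: is_dist_def)
  define Dom where "Dom = {x. 0 \<le> x \<and> ereal x < Dm f}"
  define DP where "DP = fdiv f S P R"
  define DY where "DY = fdiv f AY qY rY"
  define DZ where "DZ = fdiv f AZ qZ rZ"
  have "G DP \<le> G DY + G DZ"
  proof (rule field_le_epsilon)
    fix \<epsilon> :: real assume eps: "0 < \<epsilon>"
    have DPd: "DP \<in> Dom" unfolding DP_def Dom_def using fd_dom[OF P R acPR] by simp
    obtain \<eta> where eta: "0 < \<eta>" and heta: "\<forall>x'\<in>Dom. dist x' DP < \<eta> \<longrightarrow> dist (G x') (G DP) < \<epsilon>"
      using G_cont DPd eps unfolding continuous_on_iff Dom_def by blast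
    obtain \<rho> where rho: "0 < \<rho>" and hrho: "\<forall>q. (\<forall>s\<in>S. 0 < q s \<and> \<bar>q s - R s\<bar> < \<rho>) \<longrightarrow> DP - \<eta> < fdiv f S P q"
      using contq[OF finS Rpos Pnn eta] unfolding DP_def by blast
    obtain \<delta> where delta: "0 < \<delta>" and hdelta: "\<forall>q. (\<forall>s\<in>S. 0 < q s) \<and> sum q S = sum R S \<and> (\<exists>s\<in>S. \<rho> \<le> \<bar>q s - R s\<bar>)
            \<longrightarrow> \<delta> \<le> fdiv f S R q"
      using near[OF finS Rpos rho] by blast
    have "ereal (fdiv f S R R) < Dm f" by (rule fdiv_lt_Dm[OF R R acRR])
    hence "ereal 0 < Dm f" by (simp add: fdiv_self)
    then obtain d0 where d0: "ereal 0 < ereal d0" "ereal d0 < Dm f" using ereal_dense2 by blast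
    define \<delta>' where "\<delta>' = min \<delta> d0"
    have d'pos: "0 < \<delta>'" using d0 delta by (simp add: \<delta>'_def)
    have "ereal \<delta>' \<le> ereal d0" by (simp add: \<delta>'_def)
    hence d'Dm: "ereal \<delta>' < Dm f" using d0 by (meson le_less_trans)
    have d'd: "\<delta>' \<in> Dom" using d'pos d'Dm by (simp add: Dom_def)
    have Gd: "0 < G \<delta>'" using G_pos d'pos d'Dm by blast
    have GDP0: "0 \<le> G DP" using G_nonneg DPd by (simp add: Dom_def)
    define den where "den = G \<delta>' + G DP + 1"
    have den: "0 < den" using Gd GDP0 by (simp add: den_def)
    define lam where "lam = G \<delta>' / den"
    have lam0: "0 < lam" using Gd den by (simp add: lam_def)
    have lam1: "lam < 1" using Gd GDP0 den by (simp add: lam_def den_def field_simps)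
    have oml: "1 - lam = (G DP + 1) / den" using den by (simp add: lam_def den_def field_simps)
    have lamG: "lam * G DP \<le> (1 - lam) * G \<delta>'"
    proof -
      have "G \<delta>' * G DP \<le> (G DP + 1) * G \<delta>'" using Gd by (simp add: algebra_simps)
      hence "G \<delta>' * G DP / den \<le> (G DP + 1) * G \<delta>' / den" using den by (simp add: divide_right_mono)
      moreover have "lam * G DP = G \<delta>' * G DP / den" by (simp add: lam_def)
      moreover have "(1 - lam) * G \<delta>' = (G DP + 1) * G \<delta>' / den" by (simp add: oml)
      ultimately show ?thesis by linarith
    qed
    define AX where "AX = {0, 1::nat}"
    define pX where "pX = (\<lambda>x::nat. if x = 0 then 1 - lam else lam)"
    define W where "W = (\<lambda>x::nat. if x = 0 then rY else qY)"
    define V where "V = (\<lambda>x::nat. if x = 0 then rZ else qZ)"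
    have pX: "is_dist AX pX" using lam0 lam1 by (simp add: is_dist_def AX_def pX_def)
    have Xp: "{x\<in>AX. 0 < pX x} = AX" using lam0 lam1 by (auto simp: AX_def pX_def)
    have hW: "\<forall>x\<in>AX. 0 < pX x \<longrightarrow> is_dist AY (W x)" using Y by (simp add: AX_def W_def)
    have hV: "\<forall>x\<in>AX. 0 < pX x \<longrightarrow> is_dist AZ (V x)" using Z by (simp add: AX_def V_def)
    have main: "Info G f AX pX (AY \<times> AZ) (\<lambda>x (y, z). W x y * V x z) \<le> Info G f AX pX AY W + Info G f AX pX AZ V"
    proof -
      have "is_dist AX pX \<and> (\<forall>x\<in>AX. 0 < pX x \<longrightarrow> is_dist AY (W x) \<and> is_dist AZ (V x))"
        using pX hW hV by blast
      from isub[unfolded info_subadditive_def, rule_format, OF this] show ?thesis .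
    qed
    have IY: "Info G f AX pX AY W \<le> lam * G DY"
    proof -
      have "\<forall>x\<in>AX. 0 < pX x \<longrightarrow> abs_cont AY (W x) rY" using Y by (auto simp: AX_def W_def abs_cont_def)
      from Info_le[OF pX hW Y(2) this]
      have "Info G f AX pX AY W \<le> (\<Sum>x\<in>AX. pX x * G (fdiv f AY (W x) rY))" by (simp add: Xp)
      also have "\<dots> = lam * G DY" by (simp add: AX_def pX_def W_def fdiv_self G_zero DY_def)
      finally show ?thesis .
    qed
    have IZ: "Info G f AX pX AZ V \<le> lam * G DZ"
    proof -
      have "\<forall>x\<in>AX. 0 < pX x \<longrightarrow> abs_cont AZ (V x) rZ" using Z by (auto simp: AX_def V_def abs_cont_def)
      from Info_le[OF pX hV Z(2) this]
      have "Info G f AX pX AZ V \<le> (\<Sum>x\<in>AX. pX x * G (fdiv f AZ (V x) rZ))" by (simp add: Xp)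
      also have "\<dots> = lam * G DZ" by (simp add: AX_def pX_def V_def fdiv_self G_zero DZ_def)
      finally show ?thesis .
    qed
    define WV where "WV = (\<lambda>x (y::nat, z::nat). W x y * V x z)"
    have WV0: "WV 0 = R" by (simp add: WV_def W_def V_def R_def)
    have WV1: "WV 1 = P" by (simp add: WV_def W_def V_def P_def)
    have WV1s: "WV (Suc 0) = P" by (simp add: WV_def W_def V_def P_def)
    have hWV: "\<forall>x\<in>AX. 0 < pX x \<longrightarrow> is_dist S (WV x)" using P R by (auto simp: AX_def WV0 WV1 WV1s)
    have IYZ: "lam * (G DP - \<epsilon>) \<le> Info G f AX pX S WV"
      unfolding Info_def
    proof (rule cInf_greatest)
      show "(\<lambda>q. \<Sum>x\<in>{x \<in> AX. 0 < pX x}. pX x * G (fdiv f S (WV x) q)) `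
          {q. is_dist S q \<and> (\<forall>x\<in>AX. 0 < pX x \<longrightarrow> abs_cont S (WV x) q)} \<noteq> {}"
        using info_set_ne[OF pX hWV] by blast
    next
      fix v assume "v \<in> (\<lambda>q. \<Sum>x\<in>{x \<in> AX. 0 < pX x}. pX x * G (fdiv f S (WV x) q)) `
          {q. is_dist S q \<and> (\<forall>x\<in>AX. 0 < pX x \<longrightarrow> abs_cont S (WV x) q)}"
      then obtain q where q: "is_dist S q" and acq: "\<forall>x\<in>AX. 0 < pX x \<longrightarrow> abs_cont S (WV x) q"
        and v: "v = (\<Sum>x\<in>{x \<in> AX. 0 < pX x}. pX x * G (fdiv f S (WV x) q))" by blast
      have acR: "abs_cont S R q" using acq lam0 lam1 WV0 by (auto simp: AX_def pX_def)
      have acP: "abs_cont S P q" using acq lam0 lam1 WV1 WV1s by (auto simp: AX_def pX_def)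
      have v': "v = (1 - lam) * G (fdiv f S R q) + lam * G (fdiv f S P q)"
        unfolding v Xp by (simp add: AX_def pX_def WV0 WV1 WV1s)
      have qpos: "\<forall>s\<in>S. 0 < q s"
      proof
        fix s assume s: "s \<in> S"
        have "0 \<le> q s" using q s by (simp add: is_dist_def)
        moreover have "q s \<noteq> 0" using acR s Rpos by (auto simp: abs_cont_def)
        ultimately show "0 < q s" by simp
      qed
      have dR: "fdiv f S R q \<in> Dom" using fd_dom[OF R q acR] by (simp add: Dom_def)
      have dP: "fdiv f S P q \<in> Dom" using fd_dom[OF P q acP] by (simp add: Dom_def)
      have G1: "0 \<le> G (fdiv f S R q)" using G_nonneg dR by (simp add: Dom_def)
      have G2: "0 \<le> G (fdiv f S P q)" using G_nonneg dP by (simp add: Dom_def)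
      show "lam * (G DP - \<epsilon>) \<le> v"
      proof (cases "fdiv f S R q < \<delta>'")
        case True
        have "\<not> (\<exists>s\<in>S. \<rho> \<le> \<bar>q s - R s\<bar>)"
        proof
          assume "\<exists>s\<in>S. \<rho> \<le> \<bar>q s - R s\<bar>"
          moreover have "sum q S = sum R S" using q R by (simp add: is_dist_def)
          ultimately have "\<delta> \<le> fdiv f S R q" using hdelta qpos by blast
          thus False using True by (simp add: \<delta>'_def)
        qed
        hence "\<forall>s\<in>S. 0 < q s \<and> \<bar>q s - R s\<bar> < \<rho>" using qpos by force
        hence near1: "DP - \<eta> < fdiv f S P q" using hrho by blast
        have "G DP - \<epsilon> \<le> G (fdiv f S P q)"
        proof (cases "DP \<le> fdiv f S P q")
          case True
          thus ?thesis using mono_onD[OF G_mono] DPd dP eps unfolding Dom_def by fastforce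
        next
          case False
          hence "dist (fdiv f S P q) DP < \<eta>" using near1 by (simp add: dist_real_def)
          hence "dist (G (fdiv f S P q)) (G DP) < \<epsilon>" using heta dP by blast
          thus ?thesis by (simp add: dist_real_def)
        qed
        hence "lam * (G DP - \<epsilon>) \<le> lam * G (fdiv f S P q)" using lam0 by (simp add: mult_left_mono)
        moreover have "0 \<le> (1 - lam) * G (fdiv f S R q)" using lam1 G1 by simp
        ultimately show ?thesis unfolding v' by linarith
      next
        case False
        hence "G \<delta>' \<le> G (fdiv f S R q)" using mono_onD[OF G_mono] d'd dR unfolding Dom_def by fastforce
        hence "(1 - lam) * G \<delta>' \<le> (1 - lam) * G (fdiv f S R q)" using lam1 by (simp add: mult_left_mono)
        moreover have "0 \<le> lam * G (fdiv f S P q)" using lam0 G2 by simp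
        moreover have "lam * (G DP - \<epsilon>) \<le> lam * G DP" using lam0 eps by simp
        ultimately show ?thesis unfolding v' using lamG by linarith
      qed
    qed
    have "Info G f AX pX S WV = Info G f AX pX (AY \<times> AZ) (\<lambda>x (y, z). W x y * V x z)"
      by (simp add: S_def WV_def)
    hence "lam * (G DP - \<epsilon>) \<le> lam * (G DY + G DZ)" using IYZ main IY IZ by (simp add: distrib_left)
    hence "G DP - \<epsilon> \<le> G DY + G DZ" using lam0 by simp
    thus "G DP \<le> G DY + G DZ + \<epsilon>" by simp
  qed
  thus ?thesis by (simp add: DP_def DY_def DZ_def S_def P_def R_def)
qed

lemma info_to_div:
  assumes isub: "info_subadditive G f"
  shows "div_subadditive G f"
  unfolding div_subadditive_def
proof (intro allI impI)
  fix AY AZ :: "nat set" and qY rY qZ rZ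
  assume h: "is_dist AY qY \<and> is_dist AY rY \<and> abs_cont AY qY rY \<and> is_dist AZ qZ \<and> is_dist AZ rZ \<and> abs_cont AZ qZ rZ"
  define AY' where "AY' = {y\<in>AY. 0 < rY y}"
  define AZ' where "AZ' = {z\<in>AZ. 0 < rZ z}"
  note rY = restrict_supp[of AY qY rY, folded AY'_def]
  note rZ = restrict_supp[of AZ qZ rZ, folded AZ'_def]
  have Ydat: "is_dist AY' qY" "is_dist AY' rY" "abs_cont AY' qY rY" "\<forall>y\<in>AY'. 0 < rY y"
     "fdiv f AY' qY rY = fdiv f AY qY rY" using rY h by auto
  have Zdat: "is_dist AZ' qZ" "is_dist AZ' rZ" "abs_cont AZ' qZ rZ" "\<forall>z\<in>AZ'. 0 < rZ z"
     "fdiv f AZ' qZ rZ = fdiv f AZ qZ rZ" using rZ h by auto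
  have PD: "is_dist (AY \<times> AZ) (\<lambda>(y,z). qY y * qZ z)" using h is_dist_prod by blast
  have RD: "is_dist (AY \<times> AZ) (\<lambda>(y,z). rY y * rZ z)" using h is_dist_prod by blast
  have acP: "abs_cont (AY \<times> AZ) (\<lambda>(y,z). qY y * qZ z) (\<lambda>(y,z). rY y * rZ z)"
    using h by (auto simp: abs_cont_def)
  have seteq: "{p\<in>AY \<times> AZ. 0 < (\<lambda>(y,z). rY y * rZ z) p} = AY' \<times> AZ'"
  proof -
    have key: "(0 < rY y * rZ z) = (0 < rY y \<and> 0 < rZ z)" if "y \<in> AY" "z \<in> AZ" for y z
    proof -
      have "0 \<le> rY y" "0 \<le> rZ z" using h that by (auto simp: is_dist_def)
      thus ?thesis by (auto simp: zero_less_mult_iff)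
    qed
    show ?thesis using key by (auto simp: AY'_def AZ'_def)
  qed
  have fP: "fdiv f (AY' \<times> AZ') (\<lambda>(y,z). qY y * qZ z) (\<lambda>(y,z). rY y * rZ z)
      = fdiv f (AY \<times> AZ) (\<lambda>(y,z). qY y * qZ z) (\<lambda>(y,z). rY y * rZ z)"
    using restrict_supp(4)[OF PD RD acP] seteq by simp
  show "G (fdiv f (AY \<times> AZ) (\<lambda>(y,z). qY y * qZ z) (\<lambda>(y,z). rY y * rZ z))
          \<le> G (fdiv f AY qY rY) + G (fdiv f AZ qZ rZ)"
    using core[OF isub Ydat(1-4) Zdat(1-4)] fP Ydat(5) Zdat(5) by simp
qed

end

theorem theorem1:
  fixes f G :: "real \<Rightarrow> real"
  assumes f_convex: "convex_on {0..} f"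
    and f_one: "f 1 = 0"
    and f_strict: "strictly_convex_at_1 f"
    and G_cont: "continuous_on {x. 0 \<le> x \<and> ereal x < Dm f} G"
    and G_mono: "mono_on {x. 0 \<le> x \<and> ereal x < Dm f} G"
    and G_nonneg: "\<forall>x. 0 \<le> x \<and> ereal x < Dm f \<longrightarrow> 0 \<le> G x"
    and G_zero: "G 0 = 0"
    and G_pos: "\<forall>x. 0 < x \<and> ereal x < Dm f \<longrightarrow> 0 < G x"
  shows "div_subadditive G f \<longleftrightarrow> info_subadditive G f"
proof -
  interpret fG f G
    using f_convex f_one f_strict G_cont G_mono G_nonneg G_zero G_pos by unfold_locales
  show ?thesis using div_to_info info_to_div by blast
qed


end
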